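(* Let $r$ be an integer with $r>0$. For $N\in\mathbb{N}$ let $$K_{r,N}(z,z')=e^{-\frac{\pi}{2}(|z|^2+|z'|^2)}\sum_{j=0}^{N-1}H_{j,r}(z,\overline{z})\,\overline{H_{j,r}(z',\overline{z'})},\qquad z,z'\in\mathbb{C},$$ and let $\rho_{r,N}(z)=K_{r,N}(z,z)$. Then $$\rho_{r,N}\Big(\sqrt{\tfrac{N}{\pi}}\,\cdot\Big)\longrightarrow 1_{\mathbb{D}}\quad\text{in } L^1(\mathbb{R}^2)\text{ as } N\to\infty,$$ where $\mathbb{D}$ is the unit disk. Moreover there is a constant $C_r$ (depending only on $r$) such that for all $N$, $$\big\|\rho_{r,N}-1_{\mathbb{D}_{\sqrt{N/\pi}}}\big\|_{L^1(\mathbb{R}^2)}\le C_r\sqrt{N},$$ where $\mathbb{D}_{\rho}$ denotes the disk of radius $\rho$ centered at the origin.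
   Context: $\mathbb{C}$ is identified with $\mathbb{R}^2$. The Laguerre polynomials are $L_j^{\alpha}(x)=\sum_{i=0}^{j}(-1)^i\binom{j+\alpha}{j-i}\frac{x^i}{i!}$ for $j\ge0$, $j+\alpha\ge0$. The complex Hermite polynomials are, for $j,r\ge 0$, $H_{j,r}(z,\overline z)=\sqrt{\frac{r!}{j!}}\pi^{\frac{j-r}{2}}z^{j-r}L_r^{j-r}(\pi|z|^2)$ if $j>r$, and $H_{j,r}(z,\overline z)=(-1)^{r-j}\sqrt{\frac{j!}{r!}}\pi^{\frac{r-j}{2}}\overline{z}^{\,r-j}L_j^{r-j}(\pi|z|^2)$ if $j\le r$. The function $K_{r,N}$ is the correlation kernel of the finite $(r,N)$-pure polyanalytic Ginibre ensemble and $\rho_{r,N}$ its one-point intensity. *)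

theory Defs
  imports "HOL-Analysis.Analysis"
begin

definition laguerre :: "nat \<Rightarrow> nat \<Rightarrow> real \<Rightarrow> real" where
  "laguerre j \<alpha> x = (\<Sum>i=0..j. (-1)^i * real ((j + \<alpha>) choose (j - i)) * x^i / fact i)"

definition cHermite :: "nat \<Rightarrow> nat \<Rightarrow> complex \<Rightarrow> complex" where
  "cHermite j r z =
     (if j > r then
        complex_of_real (sqrt (fact r / fact j) * pi powr (real (j - r) / 2)) * z ^ (j - r)
          * complex_of_real (laguerre r (j - r) (pi * (cmod z)^2))
      else
        complex_of_real ((-1)^(r - j) * sqrt (fact j / fact r) * pi powr (real (r - j) / 2))
          * (cnj z) ^ (r - j) * complex_of_real (laguerre j (r - j) (pi * (cmod z)^2)))"

definition Kker :: "nat \<Rightarrow> nat \<Rightarrow> complex \<Rightarrow> complex \<Rightarrow> complex" where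
  "Kker r N z w = complex_of_real (exp (- (pi / 2) * ((cmod z)^2 + (cmod w)^2)))
     * (\<Sum>j<N. cHermite j r z * cnj (cHermite j r w))"

definition rho :: "nat \<Rightarrow> nat \<Rightarrow> complex \<Rightarrow> complex" where
  "rho r N z = Kker r N z z"

end

theory Submission
  imports Defs "HOL-Real_Asymp.Real_Asymp"
begin


lemma radial_distr:
  "distr lborel borel (\<lambda>z::complex. pi*(cmod z)^2) = density lborel (indicator {0..})"
proof (rule measure_eqI_generator_eq_countable[where E="range atMost" and \<Omega>=UNIV and A="range (\<lambda>n::nat. {..real n})"])
  show "Int_stable (range atMost :: real set set)"
    by (auto simp: Int_stable_def)
  show "range atMost \<subseteq> Pow (UNIV::real set)" by auto
  show "sets (distr lborel borel (\<lambda>z::complex. pi * (cmod z)\<^sup>2)) = sigma_sets UNIV (range atMost)"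
    by (simp add: borel_eq_atMost)
  show "sets (density lborel (indicator {0..}) :: real measure) = sigma_sets UNIV (range atMost)"
    by (simp add: borel_eq_atMost)
  show "range (\<lambda>n::nat. {..real n}) \<subseteq> range atMost" by auto
  show "\<Union> (range (\<lambda>n::nat. {..real n})) = UNIV"
    by (auto intro: real_arch_simple)
  show "countable (range (\<lambda>n::nat. {..real n}))" by auto
  have key: "emeasure (distr lborel borel (\<lambda>z::complex. pi * (cmod z)\<^sup>2)) {..a} = ennreal (max 0 a)" for a
  proof -
    have "emeasure (distr lborel borel (\<lambda>z::complex. pi * (cmod z)\<^sup>2)) {..a}
       = emeasure lborel ((\<lambda>z::complex. pi * (cmod z)\<^sup>2) -` {..a})"
      by (subst emeasure_distr) auto
    also have "\<dots> = ennreal (max 0 a)"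
    proof (cases "a < 0")
      case True
      then have "(\<lambda>z::complex. pi * (cmod z)\<^sup>2) -` {..a} = {}"
        using True by (auto simp: not_le) (smt (verit) pi_gt_zero zero_le_power2 mult_nonneg_nonneg)
      then show ?thesis using True by simp
    next
      case False
      have "(\<lambda>z::complex. pi * (cmod z)\<^sup>2) -` {..a} = cball 0 (sqrt (a/pi))"
      proof -
        have "pi * (cmod z)\<^sup>2 \<le> a \<longleftrightarrow> cmod z \<le> sqrt (a/pi)" for z
        proof -
          have "pi * (cmod z)\<^sup>2 \<le> a \<longleftrightarrow> (cmod z)\<^sup>2 \<le> a/pi" by (simp add: field_simps mult.commute)
          also have "\<dots> \<longleftrightarrow> cmod z \<le> sqrt (a/pi)"
            using False by (metis norm_ge_zero real_sqrt_le_iff real_sqrt_abs abs_norm_cancel)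
          finally show ?thesis .
        qed
        then show ?thesis by (auto simp: dist_norm)
      qed
      then show ?thesis using False
        by (simp add: emeasure_cball unit_ball_vol_2 power2_eq_square)
    qed
    finally show ?thesis .
  qed
  fix X :: "real set" assume "X \<in> range atMost"
  then obtain a where X: "X = {..a}" by auto
  have "emeasure (density lborel (indicator {0..})) {..a} = ennreal (max 0 a)"
  proof -
    have "emeasure (density lborel (indicator {0..})) {..a} = (\<integral>\<^sup>+x. indicator {0..} x * indicator {..a} x \<partial>lborel)"
      by (subst emeasure_density) (auto simp: mult.commute)
    also have "\<dots> = (\<integral>\<^sup>+x. indicator ({0..} \<inter> {..a}) x \<partial>lborel)"
      by (intro nn_integral_cong) (auto split: split_indicator)
    also have "\<dots> = emeasure lborel ({0..} \<inter> {..a})"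
      by (rule nn_integral_indicator) auto
    also have "\<dots> = ennreal (max 0 a)" proof -
      have "{0..} \<inter> {..a} = {0..a}" by auto
      then show ?thesis by (cases "a < 0") (auto simp: max_def)
    qed
    finally show ?thesis .
  qed
  with key show "emeasure (distr lborel borel (\<lambda>z::complex. pi * (cmod z)\<^sup>2)) X = emeasure (density lborel (indicator {0..})) X"
    using X by simp
next
  fix X assume "X \<in> range (\<lambda>n::nat. {..real n})"
  then obtain n where X: "X = {..real n}" by auto
  have "emeasure (distr lborel borel (\<lambda>z::complex. pi * (cmod z)\<^sup>2)) {..real n}
       = emeasure lborel ((\<lambda>z::complex. pi * (cmod z)\<^sup>2) -` {..real n})"
    by (subst emeasure_distr) auto
  also have "\<dots> \<le> emeasure lborel (cball (0::complex) (sqrt (real n/pi)))"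
  proof (rule emeasure_mono)
    show "(\<lambda>z::complex. pi * (cmod z)\<^sup>2) -` {..real n} \<subseteq> cball 0 (sqrt (real n / pi))"
    proof
      fix z :: complex assume "z \<in> (\<lambda>z::complex. pi * (cmod z)\<^sup>2) -` {..real n}"
      then have "(cmod z)^2 \<le> real n/pi" by (simp add: field_simps mult.commute)
      then show "z \<in> cball 0 (sqrt (real n / pi))"
        by (simp add: real_le_rsqrt)
    qed
  qed auto
  also have "\<dots> < \<infinity>" by (rule emeasure_lborel_cball_finite)
  finally show "emeasure (distr lborel borel (\<lambda>z::complex. pi * (cmod z)\<^sup>2)) X \<noteq> \<infinity>" using X by simp
qed

lemma radial:
  fixes h :: "real \<Rightarrow> ennreal" assumes [measurable]: "h \<in> borel_measurable borel"
  shows "(\<integral>\<^sup>+z. h (pi * (cmod z)^2) \<partial>(lborel::complex measure)) = (\<integral>\<^sup>+t. indicator {0..} t * h t \<partial>lborel)"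
proof -
  have "(\<integral>\<^sup>+z. h (pi * (cmod z)^2) \<partial>(lborel::complex measure)) = (\<integral>\<^sup>+t. h t \<partial>distr lborel borel (\<lambda>z::complex. pi*(cmod z)^2))"
    by (subst nn_integral_distr) auto
  also have "\<dots> = (\<integral>\<^sup>+t. indicator {0..} t * h t \<partial>lborel)"
    by (simp add: radial_distr nn_integral_density)
  finally show ?thesis .
qed



definition ff :: "nat \<Rightarrow> nat \<Rightarrow> real" where
  "ff j k = real (j choose k) * fact k"

lemma ff_0 [simp]: "ff j 0 = 1" by (simp add: ff_def)

lemma ff_Suc: "ff j (Suc k) = real j * ff (j - 1) k"
proof (cases j)
  case 0 then show ?thesis by (simp add: ff_def)
next
  case (Suc i)
  have h: "real (Suc i choose Suc k) * real (Suc k) = real (Suc i) * real (i choose k)"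
    using Suc_times_binomial_eq[of i k] by (metis of_nat_mult)
  have "ff (Suc i) (Suc k) = (real (Suc i choose Suc k) * real (Suc k)) * fact k"
    by (simp only: ff_def fact_Suc of_nat_mult mult.assoc)
  also have "\<dots> = real (Suc i) * ff i k" by (simp only: h ff_def mult.assoc)
  finally show ?thesis using Suc by simp
qed

lemma ff_diff: "ff (Suc j) (Suc k) = ff j (Suc k) + real (Suc k) * ff j k"
  by (simp add: ff_def algebra_simps)

definition Ap :: "nat \<Rightarrow> nat \<Rightarrow> real \<Rightarrow> real" where
  "Ap r j t = (\<Sum>k\<le>r. real (r choose k) * ff j k * (-t)^(r-k))"

lemma Ap_0 [simp]: "Ap 0 j t = 1" by (simp add: Ap_def)

lemma Ap_rec: "Ap (Suc r) j t = - t * Ap r j t + real j * Ap r (j - 1) t"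
proof -
  let ?g = "\<lambda>k. real (r choose k) * ff j k * (-t)^(Suc (r-k))"
  have A: "- t * Ap r j t = (\<Sum>k\<le>r. ?g k)"
    by (simp add: Ap_def sum_distrib_left algebra_simps)
  also have "\<dots> = (\<Sum>k\<le>Suc r. ?g k)" by simp
  also have "\<dots> = (-t)^Suc r + (\<Sum>k\<le>r. real (r choose Suc k) * ff j (Suc k) * (-t)^(r-k))"
    apply (subst sum.atMost_Suc_shift)
    apply (rule arg_cong2[where f="(+)"])
     apply simp
    apply (rule sum.cong)
     apply simp
    subgoal for k by (cases "k = r") (auto simp: Suc_diff_Suc binomial_eq_0)
    done
  finally have A': "- t * Ap r j t = (-t)^Suc r + (\<Sum>k\<le>r. real (r choose Suc k) * ff j (Suc k) * (-t)^(r-k))" .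
  have B: "real j * Ap r (j - 1) t = (\<Sum>k\<le>r. real (r choose k) * ff j (Suc k) * (-t)^(r-k))"
    by (simp add: Ap_def sum_distrib_left ff_Suc algebra_simps)
  have "Ap (Suc r) j t = (-t)^Suc r + (\<Sum>k\<le>r. real (Suc r choose Suc k) * ff j (Suc k) * (-t)^(r-k))"
    unfolding Ap_def by (subst sum.atMost_Suc_shift) simp
  also have "\<dots> = (-t)^Suc r + (\<Sum>k\<le>r. real (r choose Suc k) * ff j (Suc k) * (-t)^(r-k))
      + (\<Sum>k\<le>r. real (r choose k) * ff j (Suc k) * (-t)^(r-k))"
    by (simp add: sum.distrib algebra_simps)
  finally show ?thesis using A' B by simp
qed

lemma Ap_diff: "Ap r (Suc j) t = Ap r j t + real r * Ap (r - 1) j t"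
proof (cases r)
  case 0 then show ?thesis by simp
next
  case (Suc s)
  have "Ap r (Suc j) t - Ap r j t = (\<Sum>k\<le>Suc s. real (Suc s choose k) * (ff (Suc j) k - ff j k) * (-t)^(Suc s-k))"
    unfolding Ap_def Suc by (simp add: sum_subtractf algebra_simps)
  also have "\<dots> = (\<Sum>k\<le>s. real (Suc s choose Suc k) * (real (Suc k) * ff j k) * (-t)^(s-k))"
    by (subst sum.atMost_Suc_shift) (simp add: ff_diff)
  also have "\<dots> = (\<Sum>k\<le>s. real (Suc s) * (real (s choose k) * ff j k * (-t)^(s-k)))"
  proof (rule sum.cong)
    fix k
    have "real (Suc s choose Suc k) * real (Suc k) = real (Suc s) * real (s choose k)"
      using Suc_times_binomial_eq[of s k] by (metis of_nat_mult)
    then show "real (Suc s choose Suc k) * (real (Suc k) * ff j k) * (-t)^(s-k) = real (Suc s) * (real (s choose k) * ff j k * (-t)^(s-k))"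
      by (metis (no_types, opaque_lifting) mult.assoc mult.commute)
  qed simp
  also have "\<dots> = real r * Ap (r - 1) j t"
    by (simp add: Ap_def sum_distrib_left Suc)
  finally show ?thesis by simp
qed

lemma Ap_key: "(real j - t - real r) * Ap r j t = Ap (Suc r) j t + real r * t * Ap (r - 1) j t"
proof -
  have D: "real j * Ap r (j - 1) t = real j * (Ap r j t - real r * Ap (r - 1) (j - 1) t)"
  proof (cases j)
    case (Suc i) then show ?thesis using Ap_diff[of r i t] by simp
  qed simp
  have R: "real r * Ap r j t = real r * (- t * Ap (r-1) j t + real j * Ap (r-1) (j - 1) t)"
  proof (cases r)
    case (Suc s) then show ?thesis using Ap_rec[of s j t] by simp
  qed simp
  show ?thesis using Ap_rec[of r j t] D R by (simp add: algebra_simps)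
qed

lemma Ap_bound: "t \<ge> 0 \<Longrightarrow> \<bar>Ap r j t\<bar> \<le> (t + real j)^r"
proof (induction r arbitrary: j)
  case 0 then show ?case by simp
next
  case (Suc r)
  have "\<bar>Ap (Suc r) j t\<bar> \<le> t * \<bar>Ap r j t\<bar> + real j * \<bar>Ap r (j-1) t\<bar>"
  proof -
    have "\<bar>Ap (Suc r) j t\<bar> \<le> \<bar>- t * Ap r j t\<bar> + \<bar>real j * Ap r (j - 1) t\<bar>"
      unfolding Ap_rec by (rule abs_triangle_ineq)
    then show ?thesis using Suc.prems by (simp add: abs_mult)
  qed
  also have "\<dots> \<le> t * (t + real j)^r + real j * (t + real j)^r"
  proof -
    have "real j * \<bar>Ap r (j-1) t\<bar> \<le> real j * (t + real j)^r"
    proof (cases j)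
      case (Suc i)
      have "\<bar>Ap r (j-1) t\<bar> \<le> (t + real i)^r" using Suc.IH[of i] Suc.prems Suc by simp
      also have "\<dots> \<le> (t + real j)^r" using Suc Suc.prems by (intro power_mono) auto
      finally show ?thesis by (intro mult_left_mono) auto
    qed simp
    moreover have "t * \<bar>Ap r j t\<bar> \<le> t * (t + real j)^r"
      using Suc.IH[of j] Suc.prems by (intro mult_left_mono) auto
    ultimately show ?thesis by linarith
  qed
  also have "\<dots> = (t + real j)^Suc r" by (simp add: algebra_simps)
  finally show ?case .
qed



lemma exp_series_real: "(\<lambda>n. x^n / fact n) sums exp (x::real)"
  using exp_converges[of x] by (simp add: divide_inverse mult.commute)

lemma pow_le_fact_exp: "(x::real) \<ge> 0 \<Longrightarrow> x^n \<le> fact n * exp x"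
proof -
  assume x: "x \<ge> 0"
  have "sum (\<lambda>n. x^n / fact n) {n} \<le> suminf (\<lambda>n. x^n / fact n)"
    by (rule sum_le_suminf) (use exp_series_real[of x] x in \<open>auto intro: sums_summable\<close>)
  then have "x^n / fact n \<le> exp x" using sums_unique[OF exp_series_real[of x]] by simp
  then show ?thesis by (simp add: field_simps)
qed

definition pw :: "real \<Rightarrow> nat \<Rightarrow> real" where "pw t j = t^j / fact j"

lemma pw_nonneg: "t \<ge> 0 \<Longrightarrow> pw t j \<ge> 0" by (simp add: pw_def)

lemma summable_pw:
  assumes t: "t \<ge> 0" and c: "c \<ge> 0" and b: "\<And>j. \<bar>f j\<bar> \<le> (c + real j)^n"
  shows "summable (\<lambda>j. pw t j * f j)"
proof (rule summable_comparison_test')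
  show "summable (\<lambda>j. fact n * exp c * ((exp 1 * t)^j / fact j))"
    using exp_series_real[of "exp 1 * t"] by (intro summable_mult sums_summable)
  fix j :: nat
  have "norm (pw t j * f j) = pw t j * \<bar>f j\<bar>" using t by (simp add: pw_def abs_mult)
  also have "\<dots> \<le> pw t j * (fact n * exp (c + real j))"
    using b[of j] pow_le_fact_exp[of "c + real j" n] c t
    by (intro mult_left_mono pw_nonneg) auto
  also have "\<dots> = fact n * exp c * ((exp 1 * t)^j / fact j)"
    by (simp add: pw_def exp_add power_mult_distrib exp_of_nat_mult[symmetric] algebra_simps)
  finally show "norm (pw t j * f j) \<le> fact n * exp c * ((exp 1 * t)^j / fact j)" .
qed

lemma pw_shift:
  assumes "summable (\<lambda>m. pw t m * f m)"
  shows "(\<lambda>j. pw t j * (real j * f (j - 1))) sums (t * suminf (\<lambda>m. pw t m * f m))"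
proof -
  have "(\<lambda>m. t * (pw t m * f m)) sums (t * suminf (\<lambda>m. pw t m * f m))"
    using assms by (intro sums_mult summable_sums)
  moreover have "(\<lambda>m. pw t (Suc m) * (real (Suc m) * f (Suc m - 1))) = (\<lambda>m. t * (pw t m * f m))"
    by (rule ext) (simp add: pw_def field_simps del: of_nat_Suc)
  ultimately have "(\<lambda>m. pw t (Suc m) * (real (Suc m) * f (Suc m - 1))) sums (t * suminf (\<lambda>m. pw t m * f m))"
    by simp
  then show ?thesis by (subst (asm) sums_Suc_iff) simp
qed

lemma summable_AA:
  assumes "t \<ge> 0"
  shows "summable (\<lambda>j. pw t j * (Ap r j t * Ap s (j + d) t))"
proof (rule summable_pw[where c="t + real d" and n="r + s"])
  fix j
  have "\<bar>Ap r j t * Ap s (j + d) t\<bar> \<le> (t + real j)^r * (t + real (j + d))^s"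
    unfolding abs_mult using Ap_bound[OF assms, of r j] Ap_bound[OF assms, of s "j+d"] assms
    by (intro mult_mono) auto
  also have "\<dots> \<le> (t + real d + real j)^r * (t + real d + real j)^s"
    using assms by (intro mult_mono power_mono) auto
  finally show "\<bar>Ap r j t * Ap s (j + d) t\<bar> \<le> (t + real d + real j)^(r+s)"
    by (simp add: power_add)
qed (use assms in auto)

definition ip :: "real \<Rightarrow> nat \<Rightarrow> nat \<Rightarrow> real" where
  "ip t r s = suminf (\<lambda>j. pw t j * (Ap r j t * Ap s j t))"

lemma summable_ip: "t \<ge> 0 \<Longrightarrow> summable (\<lambda>j. pw t j * (Ap r j t * Ap s j t))"
  using summable_AA[of t r s 0] by simp

lemma ip_comm: "ip t r s = ip t s r" by (simp add: ip_def mult.commute)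

lemma ip_Suc:
  assumes t: "t \<ge> 0"
  shows "ip t (Suc r) s = t * real s * ip t r (s - 1)"
proof -
  let ?f = "\<lambda>m. Ap r m t * Ap s (Suc m) t"
  have sf: "summable (\<lambda>m. pw t m * ?f m)" using summable_AA[OF t, of r s 1] by simp
  have e1: "(\<lambda>j. pw t j * (real j * ?f (j - 1))) sums (t * suminf (\<lambda>m. pw t m * ?f m))"
    by (rule pw_shift[OF sf])
  have "(\<lambda>j. pw t j * (real j * ?f (j - 1))) = (\<lambda>j. pw t j * (real j * Ap r (j - 1) t * Ap s j t))"
    by (rule ext) (case_tac j, auto)
  note e1 = e1[unfolded this]
  have e2: "(\<lambda>j. -t * (pw t j * (Ap r j t * Ap s j t))) sums (-t * ip t r s)"
    unfolding ip_def by (intro sums_mult summable_sums summable_ip t)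
  have "(\<lambda>j. -t * (pw t j * (Ap r j t * Ap s j t)) + pw t j * (real j * Ap r (j - 1) t * Ap s j t))
        sums (-t * ip t r s + t * suminf (\<lambda>m. pw t m * ?f m))"
    by (rule sums_add[OF e2 e1])
  moreover have "(\<lambda>j. -t * (pw t j * (Ap r j t * Ap s j t)) + pw t j * (real j * Ap r (j - 1) t * Ap s j t))
      = (\<lambda>j. pw t j * (Ap (Suc r) j t * Ap s j t))"
    by (rule ext) (simp add: Ap_rec algebra_simps)
  ultimately have "(\<lambda>j. pw t j * (Ap (Suc r) j t * Ap s j t)) sums (-t * ip t r s + t * suminf (\<lambda>m. pw t m * ?f m))"
    by simp
  then have E: "ip t (Suc r) s = -t * ip t r s + t * suminf (\<lambda>m. pw t m * ?f m)"
    unfolding ip_def by (rule sums_unique[symmetric])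
  have "suminf (\<lambda>m. pw t m * ?f m) = suminf (\<lambda>m. pw t m * (Ap r m t * Ap s m t) + real s * (pw t m * (Ap r m t * Ap (s-1) m t)))"
    by (simp add: Ap_diff algebra_simps)
  also have "\<dots> = ip t r s + real s * ip t r (s - 1)"
    unfolding ip_def
    by (subst suminf_add[symmetric]) (auto intro!: summable_ip summable_mult t simp: suminf_mult[OF summable_ip[OF t]])
  finally show ?thesis using E by (simp add: algebra_simps)
qed

lemma ip_0_0: "ip t 0 0 = exp t"
  unfolding ip_def pw_def using sums_unique[OF exp_series_real[of t]] by simp

lemma ip_orth:
  assumes t: "t \<ge> 0"
  shows "ip t r s = (if r = s then fact r * t^r * exp t else 0)"
proof (induction r arbitrary: s)
  case 0
  show ?case
  proof (cases s)
    case 0 then show ?thesis by (simp add: ip_0_0)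
  next
    case (Suc s')
    then show ?thesis using ip_Suc[OF t, of s' 0] by (simp add: ip_comm)
  qed
next
  case (Suc r)
  show ?case
  proof (cases s)
    case 0 then show ?thesis using ip_Suc[OF t, of r 0] by simp
  next
    case (Suc s')
    then show ?thesis using ip_Suc[OF t, of r s] Suc.IH[of s'] by (simp add: algebra_simps)
  qed
qed

lemma sums_A2:
  assumes t: "t \<ge> 0"
  shows "(\<lambda>j. pw t j * (Ap r j t)^2) sums (fact r * t^r * exp t)"
proof -
  have "(\<lambda>j. pw t j * (Ap r j t * Ap r j t)) sums ip t r r"
    unfolding ip_def by (intro summable_sums summable_ip t)
  then show ?thesis using ip_orth[OF t, of r r] by (simp add: power2_eq_square)
qed

lemma sums_var:
  assumes t: "t \<ge> 0"
  shows "(\<lambda>j. pw t j * ((real j - t - real r) * Ap r j t)^2) sums (fact r * (2 * real r + 1) * t^(Suc r) * exp t)"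
proof -
  let ?a = "\<lambda>j. Ap (Suc r) j t" and ?b = "\<lambda>j. Ap (r - 1) j t"
  have "(\<lambda>j. pw t j * (?a j * ?a j) + 2 * (real r * t) * (pw t j * (?a j * ?b j)) + (real r * t)^2 * (pw t j * (?b j * ?b j)))
      sums (ip t (Suc r) (Suc r) + 2 * (real r * t) * ip t (Suc r) (r - 1) + (real r * t)^2 * ip t (r - 1) (r - 1))"
    unfolding ip_def by (intro sums_add sums_mult summable_sums summable_ip t)
  moreover have "(\<lambda>j. pw t j * (?a j * ?a j) + 2 * (real r * t) * (pw t j * (?a j * ?b j)) + (real r * t)^2 * (pw t j * (?b j * ?b j)))
     = (\<lambda>j. pw t j * ((real j - t - real r) * Ap r j t)^2)"
    by (rule ext) (subst Ap_key, simp add: power2_eq_square algebra_simps)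
  moreover have "ip t (Suc r) (Suc r) + 2 * (real r * t) * ip t (Suc r) (r - 1) + (real r * t)^2 * ip t (r - 1) (r - 1)
     = fact r * (2 * real r + 1) * t^(Suc r) * exp t"
  proof (cases r)
    case 0 then show ?thesis by (simp add: ip_orth[OF t])
  next
    case (Suc r')
    then show ?thesis by (simp add: ip_orth[OF t] power2_eq_square algebra_simps)
  qed
  ultimately show ?thesis by simp
qed



lemma ff_zero: "k > j \<Longrightarrow> ff j k = 0" by (simp add: ff_def)

lemma ff_Suc2: "ff j (Suc l) = ff j l * (real j - real l)"
proof (cases "l < j")
  case True
  have "(j choose Suc l) * Suc l = (j choose l) * (j - l)"
    using True by (metis Suc_times_binomial_eq binomial_absorb_comp binomial_absorption diff_Suc_1 less_imp_le mult.commute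
        Suc_pred zero_less_diff)
  then have h: "real (j choose Suc l) * real (Suc l) = real (j choose l) * (real j - real l)"
    using True by (metis of_nat_diff of_nat_mult less_imp_le)
  have "ff j (Suc l) = (real (j choose Suc l) * real (Suc l)) * fact l"
    by (simp only: ff_def fact_Suc of_nat_mult mult.assoc)
  also have "\<dots> = ff j l * (real j - real l)" by (subst h) (simp add: ff_def)
  finally show ?thesis .
next
  case False
  then show ?thesis by (cases "l = j") (auto simp: ff_def binomial_eq_0)
qed

lemma G_step:
  assumes "k \<le> r"
  shows "(\<Sum>l\<le>Suc r. (-1)^l * real (Suc r choose l) * ff j l * fact (j + Suc r - k - l))
       = real (Suc r - k) * (\<Sum>l\<le>r. (-1)^l * real (r choose l) * ff j l * fact (j + r - k - l))"
proof -
  define X where "X l = ff j l * fact (j + Suc r - k - l)" for l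
  have L: "(\<Sum>l\<le>Suc r. (-1)^l * real (Suc r choose l) * X l)
      = X 0 + (\<Sum>l\<le>r. (-1)^Suc l * (real (r choose l) + real (r choose Suc l)) * X (Suc l))"
    by (subst sum.atMost_Suc_shift) simp
  have M: "(\<Sum>l\<le>r. (-1)^l * real (r choose l) * X l) = X 0 + (\<Sum>l\<le>r. (-1)^Suc l * real (r choose Suc l) * X (Suc l))"
  proof -
    have "(\<Sum>l\<le>r. (-1)^l * real (r choose l) * X l) = (\<Sum>l\<le>Suc r. (-1)^l * real (r choose l) * X l)"
      by simp
    also have "\<dots> = X 0 + (\<Sum>l\<le>r. (-1)^Suc l * real (r choose Suc l) * X (Suc l))"
      by (subst sum.atMost_Suc_shift) simp
    finally show ?thesis .
  qed
  have E: "(\<Sum>l\<le>Suc r. (-1)^l * real (Suc r choose l) * ff j l * fact (j + Suc r - k - l)) = (\<Sum>l\<le>Suc r. (-1)^l * real (Suc r choose l) * X l)"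
    by (simp add: X_def mult.assoc)
  have "(\<Sum>l\<le>Suc r. (-1)^l * real (Suc r choose l) * X l) = (\<Sum>l\<le>r. (-1)^l * real (r choose l) * (X l - X (Suc l)))"
  proof -
    have "(\<Sum>l\<le>r. (-1)^l * real (r choose l) * (X l - X (Suc l)))
       = (\<Sum>l\<le>r. (-1)^l * real (r choose l) * X l) + (\<Sum>l\<le>r. (-1)^Suc l * real (r choose l) * X (Suc l))"
      by (simp add: sum.distrib[symmetric] algebra_simps)
    also have "\<dots> = X 0 + (\<Sum>l\<le>r. (-1)^Suc l * (real (r choose l) + real (r choose Suc l)) * X (Suc l))"
      unfolding M by (simp add: sum.distrib[symmetric] algebra_simps)
    finally show ?thesis using L by simp
  qed
  also have "\<dots> = (\<Sum>l\<le>r. real (Suc r - k) * ((-1)^l * real (r choose l) * ff j l * fact (j + r - k - l)))"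
  proof (rule sum.cong)
    fix l assume l: "l \<in> {..r}"
    show "(-1)^l * real (r choose l) * (X l - X (Suc l)) = real (Suc r - k) * ((-1)^l * real (r choose l) * ff j l * fact (j + r - k - l))"
    proof (cases "l \<le> j")
      case True
      have e1: "j + Suc r - k - l = Suc (j + r - k - l)" using True assms l by auto
      have e2: "j + Suc r - k - Suc l = j + r - k - l" by simp
      have e3: "real (Suc (j + r - k - l)) - (real j - real l) = real (Suc r - k)"
        using True assms l by (simp add: of_nat_diff)
      have "X l - X (Suc l) = ff j l * fact (j + r - k - l) * (real (Suc (j + r - k - l)) - (real j - real l))"
        unfolding X_def e1 e2 ff_Suc2 by (simp add: algebra_simps)
      then show ?thesis unfolding e3 by (simp add: algebra_simps)
    next
      case False
      then show ?thesis by (simp add: X_def ff_zero)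
    qed
  qed simp
  also have "\<dots> = real (Suc r - k) * (\<Sum>l\<le>r. (-1)^l * real (r choose l) * ff j l * fact (j + r - k - l))"
    by (simp add: sum_distrib_left)
  finally show ?thesis using E by simp
qed

lemma G_ident:
  assumes "k \<le> j" "k \<le> r"
  shows "(\<Sum>l\<le>r. (-1)^l * real (r choose l) * ff j l * fact (j + r - k - l)) = (if k = 0 then fact j * fact r else 0)"
  using assms(2)
proof (induction r rule: dec_induct)
  case base
  have "(\<Sum>l\<le>k. (-1)^l * real (k choose l) * ff j l * fact (j + k - k - l)) = (\<Sum>l\<le>k. (-1)^l * real (k choose l) * fact j)"
  proof (rule sum.cong)
    fix l assume "l \<in> {..k}"
    then have "l \<le> j" using assms by auto
    then have "fact l * fact (j - l) * (j choose l) = (fact j :: nat)" by (rule binomial_fact_lemma)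
    then have "real (fact l * fact (j - l) * (j choose l)) = real (fact j)" by simp
    then have "ff j l * fact (j - l) = fact j"
      by (simp only: ff_def of_nat_mult of_nat_fact mult_ac)
    then show "(-1)^l * real (k choose l) * ff j l * fact (j + k - k - l) = (-1)^l * real (k choose l) * fact j"
      by (simp add: mult.assoc)
  qed simp
  also have "\<dots> = (if k = 0 then fact j * fact k else 0)"
    using choose_alternating_sum[of k, where 'a=real] by (auto simp: sum_distrib_right[symmetric])
  finally show ?case .
next
  case (step r)
  show ?case using G_step[OF step(1), of j] step by (auto simp: Suc_diff_le)
qed

lemma neg1_pow_diff: "l \<le> r \<Longrightarrow> (-1::real)^(r - l) = (-1)^r * (-1)^l"
proof -
  assume "l \<le> r"
  then have "(-1::real)^r = (-1)^(r-l) * (-1)^l" by (simp add: power_add[symmetric])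
  then have "(-1::real)^r * (-1)^l = (-1)^(r-l) * ((-1)^l * (-1)^l)" by (simp add: mult.assoc)
  also have "(-1::real)^l * (-1)^l = 1" by (simp flip: power_add)
  finally show ?thesis by simp
qed

definition cc :: "nat \<Rightarrow> nat \<Rightarrow> nat \<Rightarrow> nat \<Rightarrow> real" where
  "cc r j k l = (-1)^(r-k) * (-1)^(r-l) * real (r choose k) * real (r choose l) * ff j k * ff j l"

lemma double_ident:
  "(\<Sum>k\<le>r. \<Sum>l\<le>r. cc r j k l * fact (j + r - k - l)) = fact j * fact r"
proof -
  have inner: "(\<Sum>l\<le>r. cc r j k l * fact (j + r - k - l)) =
      (if k = 0 then fact j * fact r else 0)" if k: "k \<le> r" for k
  proof (cases "k \<le> j")
    case True
    have "(\<Sum>l\<le>r. cc r j k l * fact (j + r - k - l)) =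
        ((-1)^(r-k) * real (r choose k) * ff j k * (-1)^r) * (\<Sum>l\<le>r. (-1)^l * real (r choose l) * ff j l * fact (j + r - k - l))"
      unfolding sum_distrib_left
      by (rule sum.cong) (auto simp: cc_def neg1_pow_diff[of _ r] algebra_simps)
    also have "\<dots> = (if k = 0 then fact j * fact r else 0)"
      using G_ident[OF True k] by simp
    finally show ?thesis .
  next
    case False
    then have "ff j k = 0" by (simp add: ff_zero)
    then show ?thesis using False by (simp add: cc_def)
  qed
  have "(\<Sum>k\<le>r. \<Sum>l\<le>r. cc r j k l * fact (j + r - k - l)) = (\<Sum>k\<le>r. (if k = 0 then fact j * fact r else 0))"
    by (intro sum.cong refl inner) auto
  also have "\<dots> = fact j * fact r" by simp
  finally show ?thesis .
qed



definition qq :: "nat \<Rightarrow> nat \<Rightarrow> real \<Rightarrow> real" where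
  "qq r j t = exp (-t) * pw t j * (Ap r j t)^2 / (t^r * fact r)"

lemma qq_nonneg: "t \<ge> 0 \<Longrightarrow> qq r j t \<ge> 0"
  by (simp add: qq_def pw_def)

lemma qq_sums: assumes t: "t > 0" shows "(\<lambda>j. qq r j t) sums 1"
proof -
  have "(\<lambda>j. (exp (-t) / (t^r * fact r)) * (pw t j * (Ap r j t)^2)) sums ((exp (-t) / (t^r * fact r)) * (fact r * t^r * exp t))"
    using t by (intro sums_mult sums_A2) auto
  moreover have "(exp (-t) / (t^r * fact r)) * (fact r * t^r * exp t) = 1"
    using t by (simp add: exp_minus field_simps)
  ultimately show ?thesis by (simp add: qq_def mult.assoc)
qed

lemma qq_var_sums: assumes t: "t > 0"
  shows "(\<lambda>j. qq r j t * (real j - t - real r)^2) sums ((2 * real r + 1) * t)"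
proof -
  have "(\<lambda>j. (exp (-t) / (t^r * fact r)) * (pw t j * ((real j - t - real r) * Ap r j t)^2))
     sums ((exp (-t) / (t^r * fact r)) * (fact r * (2 * real r + 1) * t^(Suc r) * exp t))"
    using t by (intro sums_mult sums_var) auto
  moreover have "(exp (-t) / (t^r * fact r)) * (fact r * (2 * real r + 1) * t^(Suc r) * exp t) = (2 * real r + 1) * t"
    using t by (simp add: exp_minus field_simps)
  moreover have "(\<lambda>j. (exp (-t) / (t^r * fact r)) * (pw t j * ((real j - t - real r) * Ap r j t)^2))
     = (\<lambda>j. qq r j t * (real j - t - real r)^2)"
    by (rule ext) (simp add: qq_def power_mult_distrib)
  ultimately show ?thesis by simp
qed

lemma FF_le1: assumes t: "t > 0" shows "(\<Sum>j<N. qq r j t) \<le> 1"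
proof -
  have "(\<Sum>j<N. qq r j t) \<le> suminf (\<lambda>j. qq r j t)"
    using qq_sums[OF t] t by (intro sum_le_suminf) (auto intro: sums_summable qq_nonneg)
  then show ?thesis using sums_unique[OF qq_sums[OF t]] by simp
qed

lemma FF_tail:
  assumes t: "t > 0" and N: "real N > t + real r"
  shows "1 - (\<Sum>j<N. qq r j t) \<le> (2 * real r + 1) * t / (real N - t - real r)^2"
proof -
  define D where "D = (real N - t - real r)^2"
  have D: "D > 0" using N by (simp add: D_def)
  have s1: "(\<lambda>j. qq r j t - (if j \<in> {..<N} then qq r j t else 0)) sums (1 - (\<Sum>j<N. qq r j t))"
    by (intro sums_diff qq_sums t sums_If_finite_set) simp
  have s2: "(\<lambda>j. qq r j t * (real j - t - real r)^2 / D) sums ((2 * real r + 1) * t / D)"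
    using qq_var_sums[OF t] by (intro sums_divide)
  have "1 - (\<Sum>j<N. qq r j t) \<le> (2 * real r + 1) * t / D"
  proof (rule sums_le[OF _ s1 s2])
    fix j
    show "qq r j t - (if j \<in> {..<N} then qq r j t else 0) \<le> qq r j t * (real j - t - real r)^2 / D"
    proof (cases "j < N")
      case True then show ?thesis using qq_nonneg[of t r j] t D by simp
    next
      case False
      then have "real j \<ge> real N" by simp
      then have "(real j - t - real r)^2 \<ge> D" unfolding D_def using N
        by (intro power_mono) auto
      then have "1 \<le> (real j - t - real r)^2 / D" using D by simp
      then have "qq r j t * 1 \<le> qq r j t * ((real j - t - real r)^2 / D)"
        using qq_nonneg[of t r j] t by (intro mult_left_mono) auto
      then show ?thesis using False by simp
    qed
  qed
  then show ?thesis by (simp add: D_def)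
qed

lemma qq_expand:
  assumes t: "t > 0"
  shows "qq r j t = (\<Sum>k\<le>r. \<Sum>l\<le>r. cc r j k l * (t^(j+r-k-l) * exp (-t))) / (fact j * fact r)"
proof -
  define a where "a k = real (r choose k) * ff j k * (-t)^(r-k)" for k
  have tm: "t^j * (a k * a l) = cc r j k l * t^(j+r-k-l) * t^r" if "k \<le> r" "l \<le> r" for k l
  proof (cases "k \<le> j")
    case True
    have e: "j + (r - k) + (r - l) = (j + r - k - l) + r" using True that by auto
    have "t^j * (a k * a l) = (-1)^(r-k) * (-1)^(r-l) * real (r choose k) * real (r choose l) * ff j k * ff j l
         * (t^j * t^(r-k) * t^(r-l))"
      by (simp add: a_def power_minus[of t] algebra_simps)
    also have "t^j * t^(r-k) * t^(r-l) = t^(j+r-k-l) * t^r" by (simp add: e flip: power_add)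
    finally show ?thesis by (simp add: cc_def algebra_simps)
  next
    case False
    then show ?thesis by (simp add: a_def cc_def ff_zero)
  qed
  have "qq r j t = exp (-t) * (t^j * (Ap r j t * Ap r j t)) / t^r / (fact j * fact r)"
    unfolding qq_def pw_def by (simp add: power2_eq_square mult_ac)
  also have "t^j * (Ap r j t * Ap r j t) = (\<Sum>k\<le>r. \<Sum>l\<le>r. t^j * (a k * a l))"
  proof -
    have Ae: "Ap r j t = sum a {..r}" by (simp add: Ap_def a_def)
    show ?thesis by (simp only: Ae sum_product) (simp only: sum_distrib_left)
  qed
  also have "\<dots> = (\<Sum>k\<le>r. \<Sum>l\<le>r. cc r j k l * t^(j+r-k-l)) * t^r"
    by (simp add: tm sum_distrib_right)
  finally have "qq r j t = exp (-t) * ((\<Sum>k\<le>r. \<Sum>l\<le>r. cc r j k l * t^(j+r-k-l)) * t^r) / t^r / (fact j * fact r)" .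
  also have "\<dots> = exp (-t) * (\<Sum>k\<le>r. \<Sum>l\<le>r. cc r j k l * t^(j+r-k-l)) / (fact j * fact r)"
    using t by simp
  also have "exp (-t) * (\<Sum>k\<le>r. \<Sum>l\<le>r. cc r j k l * t^(j+r-k-l)) = (\<Sum>k\<le>r. \<Sum>l\<le>r. cc r j k l * (t^(j+r-k-l) * exp (-t)))"
    by (simp add: sum_distrib_left mult_ac)
  finally show ?thesis .
qed

lemma gamma_nat_integral: "((\<lambda>t::real. t^n * exp (-t)) has_integral fact n) {0<..}"
proof -
  have "((\<lambda>t. t powr (real (Suc n) - 1) / exp t) has_integral Gamma (real (Suc n))) {0..}"
    by (rule Gamma_integral_real) simp
  moreover have "Gamma (real (Suc n)) = fact n" using Gamma_fact[of n, where 'a=real] by (simp add: add.commute)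
  ultimately have "((\<lambda>t. t powr (real n) / exp t) has_integral fact n) {0..}" by simp
  then have I: "((\<lambda>t. t powr (real n) / exp t) has_integral fact n) {0<..}"
    by (rule has_integral_spike_set_eq[THEN iffD1, rotated 2]) (auto intro: negligible_subset[of "{0}"])
  have E: "\<And>t. t \<in> {0<..} \<Longrightarrow> t powr (real n) / exp t = t^n * exp (-t)"
    by (simp add: powr_realpow exp_minus field_simps)
  show ?thesis by (rule has_integral_eq[OF E I])
qed

lemma qq_integral: "((\<lambda>t. qq r j t) has_integral 1) {0<..}"
proof -
  have "((\<lambda>t. (\<Sum>k\<le>r. \<Sum>l\<le>r. cc r j k l * (t^(j+r-k-l) * exp (-t))) / (fact j * fact r)) has_integral
        ((\<Sum>k\<le>r. \<Sum>l\<le>r. cc r j k l * fact (j+r-k-l)) / (fact j * fact r))) {0<..}"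
    by (intro has_integral_divide has_integral_sum finite_atMost has_integral_mult_right gamma_nat_integral)
  then have I: "((\<lambda>t. (\<Sum>k\<le>r. \<Sum>l\<le>r. cc r j k l * (t^(j+r-k-l) * exp (-t))) / (fact j * fact r)) has_integral 1) {0<..}"
    unfolding double_ident by simp
  have E: "\<And>t. t \<in> {0<..} \<Longrightarrow> (\<Sum>k\<le>r. \<Sum>l\<le>r. cc r j k l * (t^(j+r-k-l) * exp (-t))) / (fact j * fact r) = qq r j t"
    by (simp add: qq_expand)
  show ?thesis by (rule has_integral_eq[OF E I])
qed

lemma qq_nn_integral: "(\<integral>\<^sup>+t. ennreal (indicator {0<..} t * qq r j t) \<partial>lborel) = 1"
  using nn_integral_has_integral_lebesgue[OF _ qq_integral, of r j] qq_nonneg by simp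



lemma qq_measurable [measurable]: "(\<lambda>t. qq r j t) \<in> borel_measurable borel"
  unfolding qq_def pw_def Ap_def by measurable

definition FF :: "nat \<Rightarrow> nat \<Rightarrow> real \<Rightarrow> real" where
  "FF r N t = (\<Sum>j<N. qq r j t)"

lemma FF_measurable [measurable]: "(\<lambda>t. FF r N t) \<in> borel_measurable borel"
  unfolding FF_def by measurable

lemma FF_nonneg: "t \<ge> 0 \<Longrightarrow> FF r N t \<ge> 0"
  unfolding FF_def by (intro sum_nonneg qq_nonneg)

lemma FF_integral: "(\<integral>\<^sup>+t. ennreal (indicator {0<..} t * FF r N t) \<partial>lborel) = real N"
proof -
  have "(\<integral>\<^sup>+t. ennreal (indicator {0<..} t * FF r N t) \<partial>lborel)
      = (\<integral>\<^sup>+t. (\<Sum>j<N. ennreal (indicator {0<..} t * qq r j t)) \<partial>lborel)"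
  proof (rule nn_integral_cong)
    fix t :: real
    show "ennreal (indicator {0<..} t * FF r N t) = (\<Sum>j<N. ennreal (indicator {0<..} t * qq r j t))"
      by (subst sum_ennreal) (auto simp: FF_def sum_distrib_left indicator_def intro: qq_nonneg)
  qed
  also have "\<dots> = (\<Sum>j<N. (\<integral>\<^sup>+t. ennreal (indicator {0<..} t * qq r j t) \<partial>lborel))"
    by (rule nn_integral_sum) measurable
  also have "\<dots> = real N" by (simp add: qq_nn_integral ennreal_of_nat_eq_real_of_nat)
  finally show ?thesis .
qed

lemma integral_inv_sq:
  fixes b a K :: real
  assumes a: "a \<ge> 0" and ba: "b - a > 0" and K: "K \<ge> 0"
  shows "(\<integral>\<^sup>+t. ennreal (indicator {0..a} t * (K / (b - t)^2)) \<partial>lborel) \<le> ennreal (K / (b - a))"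
proof -
  have d: "((\<lambda>t. K / (b - t)) has_vector_derivative (K / (b - t)^2)) (at t within {0..a})" if "t \<in> {0..a}" for t
  proof -
    have "b - t \<noteq> 0" using that ba by auto
    then show ?thesis
      by (auto intro!: derivative_eq_intros simp: has_real_derivative_iff_has_vector_derivative[symmetric] power2_eq_square field_simps)
  qed
  have "((\<lambda>t. K / (b - t)^2) has_integral (K / (b - a) - K / (b - 0))) {0..a}"
    by (rule fundamental_theorem_of_calculus[OF a d])
  then have "(\<integral>\<^sup>+t. ennreal (indicator {0..a} t * (K / (b - t)^2)) \<partial>lborel) = ennreal (K / (b - a) - K / b)"
    by (intro nn_integral_has_integral_lebesgue) (use K in auto)
  also have "\<dots> \<le> ennreal (K / (b - a))"
    using K ba a by (intro ennreal_leI) auto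
  finally show ?thesis .
qed

definition psi :: "nat \<Rightarrow> nat \<Rightarrow> real \<Rightarrow> real" where
  "psi r N t = \<bar>FF r N t - indicator {..<real N} t\<bar>"

lemma psi_measurable [measurable]: "(\<lambda>t. psi r N t) \<in> borel_measurable borel"
  unfolding psi_def by measurable

lemma FF_le1': "t > 0 \<Longrightarrow> FF r N t \<le> 1"
  unfolding FF_def by (rule FF_le1)

lemma u_bound:
  assumes N: "N \<ge> 1"
  shows "(\<integral>\<^sup>+t. ennreal (indicator {0<..<real N} t * (1 - FF r N t)) \<partial>lborel) \<le> ennreal ((3 * real r + 2) * sqrt (real N))"
proof -
  define s where "s = sqrt (real N)"
  define a where "a = real N - real r - s"
  define K where "K = (2 * real r + 1) * real N"
  have s1: "s \<ge> 1" using N by (simp add: s_def)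
  have sN: "s * s = real N" by (simp add: s_def)
  have K: "K \<ge> 0" by (simp add: K_def)
  have pt: "ennreal (indicator {0<..<real N} t * (1 - FF r N t))
      \<le> ennreal (indicator {0..a} t * (K / (real N - real r - t)^2)) + ennreal (indicator {a..real N} t)" for t
  proof (cases "t \<in> {0<..<real N}")
    case False then show ?thesis by simp
  next
    case True
    then have t0: "t > 0" and tN: "t < real N" by auto
    show ?thesis
    proof (cases "t \<le> a")
      case True
      have Nt: "real N - t - real r \<ge> s" using True by (simp add: a_def)
      then have Nt': "real N > t + real r" using s1 by simp
      have "1 - FF r N t \<le> (2 * real r + 1) * t / (real N - t - real r)^2"
        using FF_tail[OF t0 Nt'] by (simp add: FF_def)
      also have "\<dots> \<le> K / (real N - real r - t)^2"
      proof -
        have e: "real N - t - real r = real N - real r - t" by simp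
        show ?thesis unfolding K_def e by (intro divide_right_mono mult_left_mono) (use tN t0 in auto)
      qed
      finally have "indicator {0<..<real N} t * (1 - FF r N t) \<le> indicator {0..a} t * (K / (real N - real r - t)^2)"
        using True t0 tN by (simp add: indicator_def)
      then have "ennreal (indicator {0<..<real N} t * (1 - FF r N t)) \<le> ennreal (indicator {0..a} t * (K / (real N - real r - t)^2))"
        by (rule ennreal_leI)
      then show ?thesis by (rule order_trans) simp
    next
      case False
      have "indicator {0<..<real N} t * (1 - FF r N t) \<le> indicator {a..real N} t"
        using False t0 tN FF_nonneg[of t r N] by (simp add: indicator_def)
      then have "ennreal (indicator {0<..<real N} t * (1 - FF r N t)) \<le> ennreal (indicator {a..real N} t)"
        by (rule ennreal_leI)
      then show ?thesis by (rule order_trans) simp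
    qed
  qed
  have "(\<integral>\<^sup>+t. ennreal (indicator {0<..<real N} t * (1 - FF r N t)) \<partial>lborel)
      \<le> (\<integral>\<^sup>+t. ennreal (indicator {0..a} t * (K / (real N - real r - t)^2)) + ennreal (indicator {a..real N} t) \<partial>lborel)"
    by (rule nn_integral_mono) (rule pt)
  also have "\<dots> = (\<integral>\<^sup>+t. ennreal (indicator {0..a} t * (K / (real N - real r - t)^2)) \<partial>lborel)
      + (\<integral>\<^sup>+t. ennreal (indicator {a..real N} t) \<partial>lborel)"
    by (rule nn_integral_add) measurable
  also have "(\<integral>\<^sup>+t. ennreal (indicator {a..real N} t) \<partial>lborel) = ennreal (real r + s)"
  proof -
    have "(\<integral>\<^sup>+t. ennreal (indicator {a..real N} t) \<partial>lborel) = (\<integral>\<^sup>+t. indicator {a..real N} t \<partial>lborel)"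
      by (intro nn_integral_cong) (simp split: split_indicator)
    also have "\<dots> = ennreal (real r + s)" using s1 by (simp add: a_def)
    finally show ?thesis .
  qed
  also have "(\<integral>\<^sup>+t. ennreal (indicator {0..a} t * (K / (real N - real r - t)^2)) \<partial>lborel) \<le> ennreal ((2 * real r + 1) * s)"
  proof (cases "a \<ge> 0")
    case True
    have "(\<integral>\<^sup>+t. ennreal (indicator {0..a} t * (K / (real N - real r - t)^2)) \<partial>lborel) \<le> ennreal (K / (real N - real r - a))"
      by (rule integral_inv_sq[OF True _ K]) (use s1 in \<open>simp add: a_def\<close>)
    also have "K / (real N - real r - a) = (2 * real r + 1) * s"
      using s1 sN by (simp add: a_def K_def field_simps)
    finally show ?thesis .
  next
    case False
    then have "\<And>t. indicator {0..a} t = (0::real)" by (simp add: indicator_def)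
    then show ?thesis by simp
  qed
  then have "(\<integral>\<^sup>+t. ennreal (indicator {0..a} t * (K / (real N - real r - t)^2)) \<partial>lborel) + ennreal (real r + s)
      \<le> ennreal ((2 * real r + 1) * s) + ennreal (real r + s)"
    by (rule add_right_mono)
  also have "\<dots> = ennreal ((2 * real r + 1) * s + (real r + s))" using s1 by (simp add: ennreal_plus)
  also have "\<dots> \<le> ennreal ((3 * real r + 2) * sqrt (real N))"
  proof (rule ennreal_leI)
    have "real r \<le> real r * s" using s1 by (simp add: mult_le_cancel_left1)
    then show "(2 * real r + 1) * s + (real r + s) \<le> (3 * real r + 2) * sqrt (real N)"
      by (simp add: s_def[symmetric] algebra_simps)
  qed
  finally show ?thesis .
qed

lemma main1D:
  "(\<integral>\<^sup>+t. indicator {0..} t * ennreal (psi r N t) \<partial>lborel) \<le> ennreal ((6 * real r + 4) * sqrt (real N))"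
proof (cases "N = 0")
  case True
  have z: "indicator {0..} t * ennreal (psi r N t) = 0" for t
  proof (cases "t \<ge> 0")
    case True
    then have "psi r N t = 0" using \<open>N = 0\<close> by (simp add: psi_def FF_def)
    then show ?thesis by simp
  qed simp
  have "(\<integral>\<^sup>+t. indicator {0..} t * ennreal (psi r N t) \<partial>lborel) = (\<integral>\<^sup>+t. 0 \<partial>(lborel::real measure))"
    by (rule nn_integral_cong) (rule z)
  then show ?thesis by simp
next
  case False
  then have N: "N \<ge> 1" by simp
  define u where "u t = indicator {0<..<real N} t * (1 - FF r N t)" for t
  define v where "v t = indicator ({0<..} \<inter> {real N..}) t * FF r N t" for t
  define w where "w t = indicator {0<..<real N} t * FF r N t" for t
  have [measurable]: "u \<in> borel_measurable borel" "v \<in> borel_measurable borel" "w \<in> borel_measurable borel"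
    unfolding u_def[abs_def] v_def[abs_def] w_def[abs_def] by simp_all
  have u0: "u t \<ge> 0" for t using FF_le1'[of t r N] by (simp add: u_def indicator_def)
  have v0: "v t \<ge> 0" for t using FF_nonneg[of t r N] by (simp add: v_def indicator_def)
  have w0: "w t \<ge> 0" for t using FF_nonneg[of t r N] by (simp add: w_def indicator_def)
  have AE0: "AE t in lborel. (t::real) \<noteq> 0" by (rule AE_lborel_singleton)
  have "(\<integral>\<^sup>+t. indicator {0..} t * ennreal (psi r N t) \<partial>lborel) = (\<integral>\<^sup>+t. ennreal (u t) + ennreal (v t) \<partial>lborel)"
  proof (rule nn_integral_cong_AE, rule eventually_mono[OF AE0])
    fix t :: real assume t: "t \<noteq> 0"
    show "indicator {0..} t * ennreal (psi r N t) = ennreal (u t) + ennreal (v t)"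
    proof (cases "t > 0")
      case False
      then show ?thesis using t by (auto simp: u_def v_def indicator_def)
    next
      case True
      have le1: "FF r N t \<le> 1" using FF_le1'[OF True] .
      have ge0: "FF r N t \<ge> 0" using FF_nonneg[of t r N] True by simp
      show ?thesis
      proof (cases "t < real N")
        case lt: True
        have "psi r N t = 1 - FF r N t" using lt le1 by (simp add: psi_def)
        moreover have "u t = 1 - FF r N t" using lt True by (simp add: u_def)
        moreover have "v t = 0" using lt by (simp add: v_def)
        ultimately show ?thesis using True by simp
      next
        case ge: False
        have "psi r N t = FF r N t" using ge ge0 by (simp add: psi_def)
        moreover have "u t = 0" using ge by (simp add: u_def)
        moreover have "v t = FF r N t" using ge True by (simp add: v_def)
        ultimately show ?thesis using True by simp
      qed
    qed
  qed
  also have "\<dots> = (\<integral>\<^sup>+t. ennreal (u t) \<partial>lborel) + (\<integral>\<^sup>+t. ennreal (v t) \<partial>lborel)"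
    by (rule nn_integral_add) measurable
  finally have Phi: "(\<integral>\<^sup>+t. indicator {0..} t * ennreal (psi r N t) \<partial>lborel)
     = (\<integral>\<^sup>+t. ennreal (u t) \<partial>lborel) + (\<integral>\<^sup>+t. ennreal (v t) \<partial>lborel)" .
  have WV: "(\<integral>\<^sup>+t. ennreal (w t) \<partial>lborel) + (\<integral>\<^sup>+t. ennreal (v t) \<partial>lborel) = real N"
  proof -
    have "(\<integral>\<^sup>+t. ennreal (w t) \<partial>lborel) + (\<integral>\<^sup>+t. ennreal (v t) \<partial>lborel) = (\<integral>\<^sup>+t. ennreal (w t) + ennreal (v t) \<partial>lborel)"
      by (rule nn_integral_add[symmetric]) measurable
    also have "\<dots> = (\<integral>\<^sup>+t. ennreal (indicator {0<..} t * FF r N t) \<partial>lborel)"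
    proof (rule nn_integral_cong)
      fix t :: real
      show "ennreal (w t) + ennreal (v t) = ennreal (indicator {0<..} t * FF r N t)"
        using w0[of t] v0[of t] by (subst ennreal_plus[symmetric]) (auto simp: w_def v_def indicator_def)
    qed
    also have "\<dots> = real N" by (rule FF_integral)
    finally show ?thesis .
  qed
  have WU: "(\<integral>\<^sup>+t. ennreal (w t) \<partial>lborel) + (\<integral>\<^sup>+t. ennreal (u t) \<partial>lborel) = real N"
  proof -
    have "(\<integral>\<^sup>+t. ennreal (w t) \<partial>lborel) + (\<integral>\<^sup>+t. ennreal (u t) \<partial>lborel) = (\<integral>\<^sup>+t. ennreal (w t) + ennreal (u t) \<partial>lborel)"
      by (rule nn_integral_add[symmetric]) measurable
    also have "\<dots> = (\<integral>\<^sup>+t. indicator {0<..<real N} t \<partial>lborel)"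
    proof (rule nn_integral_cong)
      fix t :: real
      show "ennreal (w t) + ennreal (u t) = indicator {0<..<real N} t"
      proof -
        have "ennreal (w t) + ennreal (u t) = ennreal (w t + u t)"
          using w0[of t] u0[of t] by (rule ennreal_plus[symmetric])
        also have "w t + u t = indicator {0<..<real N} t"
          by (simp add: w_def u_def algebra_simps flip: distrib_left)
        finally show ?thesis by (simp split: split_indicator)
      qed
    qed
    also have "\<dots> = real N" by simp
    finally show ?thesis .
  qed
  have Wfin: "(\<integral>\<^sup>+t. ennreal (w t) \<partial>lborel) \<noteq> \<infinity>"
  proof -
    have "(\<integral>\<^sup>+t. ennreal (w t) \<partial>lborel) \<le> real N" using WV by (metis le_iff_add)
    then show ?thesis using top.extremum_uniqueI by fastforce
  qed
  have UV: "(\<integral>\<^sup>+t. ennreal (v t) \<partial>lborel) = (\<integral>\<^sup>+t. ennreal (u t) \<partial>lborel)"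
    using WV WU Wfin ennreal_add_left_cancel by metis
  have "(\<integral>\<^sup>+t. indicator {0..} t * ennreal (psi r N t) \<partial>lborel) = 2 * (\<integral>\<^sup>+t. ennreal (u t) \<partial>lborel)"
    unfolding Phi UV by (simp add: mult_2)
  also have "\<dots> \<le> 2 * ennreal ((3 * real r + 2) * sqrt (real N))"
    using u_bound[OF N, of r] unfolding u_def by (rule mult_left_mono) simp
  also have "\<dots> = ennreal ((6 * real r + 4) * sqrt (real N))"
    proof -
    have "ennreal ((6 * real r + 4) * sqrt (real N)) = ennreal 2 * ennreal ((3 * real r + 2) * sqrt (real N))"
      by (subst ennreal_mult[symmetric]) (auto simp: algebra_simps)
    then show ?thesis by simp
  qed
  finally show ?thesis .
qed



lemma fact_split: "i \<le> r \<Longrightarrow> real (r choose (r - i)) * fact (r - i) = fact r / fact i"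
proof -
  assume i: "i \<le> r"
  have "fact (r - i) * fact (r - (r - i)) * (r choose (r - i)) = (fact r :: nat)"
    by (rule binomial_fact_lemma) simp
  then have "real (fact (r - i) * fact i * (r choose (r - i))) = real (fact r)" using i by simp
  then have "fact (r - i) * fact i * real (r choose (r - i)) = (fact r :: real)"
    by (simp only: of_nat_mult of_nat_fact)
  then show ?thesis by (simp add: field_simps mult_ac)
qed

lemma fact_split2: "i \<le> r \<Longrightarrow> fact i * (fact (r - i) * real (r choose (r - i))) = (fact r :: real)"
  using fact_split[of i r] by (simp add: field_simps mult_ac)

lemma Ap_laguerre1:
  assumes "r \<le> j"
  shows "Ap r j t = fact r * laguerre r (j - r) t"
proof -
  have "Ap r j t = (\<Sum>k=0..r. real (r choose k) * ff j k * (-t)^(r-k))"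
    by (simp add: Ap_def atMost_atLeast0)
  also have "\<dots> = (\<Sum>i=0..r. real (r choose (r - i)) * ff j (r - i) * (-t)^(r-(r-i)))"
    by (subst sum.atLeastAtMost_rev) simp
  also have "\<dots> = (\<Sum>i=0..r. fact r * ((-1)^i * real (j choose (r - i)) * t^i / fact i))"
  proof (rule sum.cong)
    fix i assume "i \<in> {0..r}"
    then have i: "i \<le> r" by simp
    have "real (r choose (r - i)) * ff j (r - i) * (-t)^(r-(r-i))
        = (real (r choose (r - i)) * fact (r - i)) * real (j choose (r - i)) * (-t)^i"
      using i by (simp add: ff_def mult_ac)
    also have "\<dots> = fact r * ((-1)^i * real (j choose (r - i)) * t^i / fact i)"
      using i by (simp add: fact_split2 power_minus[of t] field_simps)
    finally show "real (r choose (r - i)) * ff j (r - i) * (-t)^(r-(r-i)) = fact r * ((-1)^i * real (j choose (r - i)) * t^i / fact i)" .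
  qed simp
  also have "\<dots> = fact r * laguerre r (j - r) t"
    using assms by (simp add: laguerre_def sum_distrib_left)
  finally show ?thesis .
qed

lemma Ap_laguerre2:
  assumes "j \<le> r"
  shows "Ap r j t = (-1)^(r-j) * fact j * t^(r-j) * laguerre j (r - j) t"
proof -
  have "Ap r j t = (\<Sum>k=0..j. real (r choose k) * ff j k * (-t)^(r-k))"
    unfolding Ap_def atMost_atLeast0
    by (rule sum.mono_neutral_right) (use assms in \<open>auto simp: ff_zero\<close>)
  also have "\<dots> = (\<Sum>i=0..j. real (r choose (j - i)) * ff j (j - i) * (-t)^(r-(j-i)))"
    by (subst sum.atLeastAtMost_rev) simp
  also have "\<dots> = (\<Sum>i=0..j. (-1)^(r-j) * fact j * t^(r-j) * ((-1)^i * real (r choose (j - i)) * t^i / fact i))"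
  proof (rule sum.cong)
    fix i assume "i \<in> {0..j}"
    then have i: "i \<le> j" by simp
    have e: "r - (j - i) = (r - j) + i" using i assms by simp
    have "real (r choose (j - i)) * ff j (j - i) * (-t)^(r-(j-i))
        = (real (j choose (j - i)) * fact (j - i)) * real (r choose (j - i)) * (-t)^((r - j) + i)"
      unfolding e by (simp add: ff_def mult_ac)
    also have "\<dots> = (-1)^(r-j) * fact j * t^(r-j) * ((-1)^i * real (r choose (j - i)) * t^i / fact i)"
      using i by (simp add: fact_split2 power_minus[of t] power_add field_simps)
    finally show "real (r choose (j - i)) * ff j (j - i) * (-t)^(r-(j-i)) = (-1)^(r-j) * fact j * t^(r-j) * ((-1)^i * real (r choose (j - i)) * t^i / fact i)" .
  qed simp
  also have "\<dots> = (-1)^(r-j) * fact j * t^(r-j) * laguerre j (r - j) t"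
    using assms by (simp add: laguerre_def sum_distrib_left)
  finally show ?thesis .
qed



lemma pi_powr_sq: "(pi powr (real n / 2))^2 = pi^n"
proof -
  have "(pi powr (real n / 2))^2 = pi powr (real n / 2) * pi powr (real n / 2)" by (simp add: power2_eq_square)
  also have "\<dots> = pi powr (real n)" by (simp flip: powr_add)
  also have "\<dots> = pi^n" by (simp add: powr_realpow)
  finally show ?thesis .
qed

lemma cH_norm_sq:
  assumes t: "t = pi * (cmod z)^2" and z: "z \<noteq> 0"
  shows "(cmod (cHermite j r z))^2 = t^j * (Ap r j t)^2 / (t^r * fact j * fact r)"
proof -
  have tpos: "t > 0" using t z by simp
  show ?thesis
  proof (cases "j > r")
    case True
    let ?L = "laguerre r (j - r) (pi * (cmod z)^2)"
    have "(cmod (cHermite j r z))^2 = (sqrt (fact r / fact j))^2 * (pi powr (real (j - r) / 2))^2 * ((cmod z)^2)^(j - r) * ?L^2"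
      using True by (simp add: cHermite_def norm_mult norm_power power_mult_distrib abs_mult power_mult[symmetric] mult.commute[of 2])
    also have "\<dots> = fact r / fact j * t^(j - r) * (laguerre r (j - r) t)^2"
      by (simp add: pi_powr_sq t power_mult_distrib)
    also have "\<dots> = t^j * (Ap r j t)^2 / (t^r * fact j * fact r)"
    proof -
      have "t^j = t^(j-r) * t^r" using True by (simp flip: power_add)
      then show ?thesis using tpos True by (simp add: Ap_laguerre1 t[symmetric] power_mult_distrib field_simps power2_eq_square)
    qed
    finally show ?thesis .
  next
    case False
    then have jr: "j \<le> r" by simp
    let ?L = "laguerre j (r - j) (pi * (cmod z)^2)"
    have "(cmod (cHermite j r z))^2 = (sqrt (fact j / fact r))^2 * (pi powr (real (r - j) / 2))^2 * ((cmod z)^2)^(r - j) * ?L^2"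
      using False by (simp add: cHermite_def norm_mult norm_power power_mult_distrib abs_mult power_mult[symmetric] mult.commute[of 2])
    also have "\<dots> = fact j / fact r * t^(r - j) * (laguerre j (r - j) t)^2"
      by (simp add: pi_powr_sq t power_mult_distrib)
    also have "\<dots> = t^j * (Ap r j t)^2 / (t^r * fact j * fact r)"
    proof -
      have "t^r = t^(r-j) * t^j" using jr by (simp flip: power_add)
      moreover have "((-1::real)^(r-j))^2 = 1" by (simp flip: power_mult add: power_mult_distrib mult.commute[of _ 2] power_mult)
      ultimately show ?thesis using tpos jr by (simp add: Ap_laguerre2 t[symmetric] power_mult_distrib field_simps power2_eq_square)
    qed
    finally show ?thesis .
  qed
qed

lemma rho_eq:
  assumes z: "z \<noteq> 0"
  shows "rho r N z = complex_of_real (FF r N (pi * (cmod z)^2))"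
proof -
  define t where "t = pi * (cmod z)^2"
  have hc: "cHermite j r z * cnj (cHermite j r z) = complex_of_real ((cmod (cHermite j r z))^2)" for j
    by (rule complex_norm_square[symmetric])
  have ex: "exp (- (pi / 2) * ((cmod z)^2 + (cmod z)^2)) = exp (- t)" by (simp add: t_def)
  have "rho r N z = complex_of_real (exp (- t)) * (\<Sum>j<N. complex_of_real ((cmod (cHermite j r z))^2))"
    unfolding rho_def Kker_def ex hc ..
  also have "\<dots> = complex_of_real (\<Sum>j<N. exp (-t) * (cmod (cHermite j r z))^2)"
    by (simp add: sum_distrib_left)
  also have "\<dots> = complex_of_real (FF r N t)"
    unfolding FF_def qq_def pw_def
    by (simp add: cH_norm_sq[OF t_def z] field_simps)
  finally show ?thesis by (simp add: t_def)
qed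



lemma ind_ball_eq:
  assumes "c \<ge> 0"
  shows "indicator (ball (0::complex) (sqrt c)) z = (indicator {..<pi * c} (pi * (cmod z)^2) :: real)"
proof -
  have "cmod z < sqrt c \<longleftrightarrow> (cmod z)^2 < c"
    by (metis norm_ge_zero real_sqrt_abs abs_norm_cancel real_sqrt_less_iff)
  also have "\<dots> \<longleftrightarrow> pi * (cmod z)^2 < pi * c" by simp
  finally show ?thesis by (simp add: indicator_def dist_norm)
qed

lemma integrand_eq:
  assumes z: "z \<noteq> 0"
  shows "cmod (rho r N z - complex_of_real (indicator (ball (0::complex) (sqrt (real N / pi))) z))
       = psi r N (pi * (cmod z)^2)"
proof -
  have "indicator (ball (0::complex) (sqrt (real N / pi))) z = (indicator {..<real N} (pi * (cmod z)^2) :: real)"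
    using ind_ball_eq[of "real N / pi" z] by simp
  then show ?thesis using z
    by (simp add: rho_eq psi_def flip: of_real_diff)
qed

lemma part2: "(\<integral>\<^sup>+ z. ennreal (cmod (rho r N z
              - complex_of_real (indicator (ball (0::complex) (sqrt (real N / pi))) z))) \<partial>lborel)
           \<le> ennreal ((6 * real r + 4) * sqrt (real N))"
proof -
  have "(\<integral>\<^sup>+ z. ennreal (cmod (rho r N z
              - complex_of_real (indicator (ball (0::complex) (sqrt (real N / pi))) z))) \<partial>lborel)
      = (\<integral>\<^sup>+ z. ennreal (psi r N (pi * (cmod z)^2)) \<partial>(lborel::complex measure))"
    by (rule nn_integral_cong_AE, rule eventually_mono[OF AE_lborel_singleton[of 0]]) (simp add: integrand_eq)
  also have "\<dots> = (\<integral>\<^sup>+t. indicator {0..} t * ennreal (psi r N t) \<partial>lborel)"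
    by (rule radial) measurable
  also have "\<dots> \<le> ennreal ((6 * real r + 4) * sqrt (real N))" by (rule main1D)
  finally show ?thesis .
qed

lemma part1_bound:
  assumes N: "N \<ge> 1"
  shows "(\<integral>\<^sup>+ z. ennreal (cmod (rho r N (complex_of_real (sqrt (real N / pi)) * z)
              - complex_of_real (indicator (ball (0::complex) 1) z))) \<partial>lborel)
       \<le> ennreal (pi * (6 * real r + 4) / sqrt (real N))"
proof -
  define c where "c = real N / pi"
  have c: "c > 0" using N by (simp add: c_def)
  have pt: "cmod (rho r N (complex_of_real (sqrt (real N / pi)) * z) - complex_of_real (indicator (ball (0::complex) 1) z))
      = psi r N (c * (pi * (cmod z)^2))" if z: "z \<noteq> 0" for z
  proof -
    let ?w = "complex_of_real (sqrt (real N / pi)) * z"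
    have w: "?w \<noteq> 0" using z N by simp
    have cw: "pi * (cmod ?w)^2 = c * (pi * (cmod z)^2)"
      using c by (simp add: norm_mult power_mult_distrib c_def)
    have "indicator (ball (0::complex) 1) z = (indicator {..<pi * 1} (pi * (cmod z)^2) :: real)"
      using ind_ball_eq[of 1 z] by simp
    also have "\<dots> = indicator {..<real N} (c * (pi * (cmod z)^2))"
      using c by (simp add: indicator_def c_def field_simps)
    finally have "indicator (ball (0::complex) 1) z = (indicator {..<real N} (c * (pi * (cmod z)^2)) :: real)" .
    then show ?thesis using w
      by (simp add: rho_eq psi_def cw flip: of_real_diff)
  qed
  have "(\<integral>\<^sup>+ z. ennreal (cmod (rho r N (complex_of_real (sqrt (real N / pi)) * z)
              - complex_of_real (indicator (ball (0::complex) 1) z))) \<partial>lborel)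
      = (\<integral>\<^sup>+ z. ennreal (psi r N (c * (pi * (cmod z)^2))) \<partial>(lborel::complex measure))"
    by (rule nn_integral_cong_AE, rule eventually_mono[OF AE_lborel_singleton[of 0]]) (simp add: pt)
  also have "\<dots> = (\<integral>\<^sup>+t. indicator {0..} t * ennreal (psi r N (c * t)) \<partial>lborel)"
    by (rule radial[where h="\<lambda>t. ennreal (psi r N (c * t))"]) measurable
  also have "\<dots> = (\<integral>\<^sup>+t. indicator {0..} (0 + c * t) * ennreal (psi r N (0 + c * t)) \<partial>lborel)"
    using c by (intro nn_integral_cong) (simp add: indicator_def zero_le_mult_iff)
  finally have E: "(\<integral>\<^sup>+ z. ennreal (cmod (rho r N (complex_of_real (sqrt (real N / pi)) * z)
              - complex_of_real (indicator (ball (0::complex) 1) z))) \<partial>lborel)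
      = (\<integral>\<^sup>+t. indicator {0..} (0 + c * t) * ennreal (psi r N (0 + c * t)) \<partial>lborel)" .
  have A: "(\<integral>\<^sup>+t. indicator {0..} t * ennreal (psi r N t) \<partial>lborel)
      = ennreal c * (\<integral>\<^sup>+t. indicator {0..} (0 + c * t) * ennreal (psi r N (0 + c * t)) \<partial>lborel)"
    using nn_integral_real_affine[of "\<lambda>t. indicator {0..} t * ennreal (psi r N t)" c 0] c by simp
  have "ennreal c * (\<integral>\<^sup>+t. indicator {0..} (0 + c * t) * ennreal (psi r N (0 + c * t)) \<partial>lborel)
      \<le> ennreal ((6 * real r + 4) * sqrt (real N))"
    using main1D[of r N] unfolding A .
  then have "ennreal (1 / c) * (ennreal c * (\<integral>\<^sup>+t. indicator {0..} (0 + c * t) * ennreal (psi r N (0 + c * t)) \<partial>lborel))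
      \<le> ennreal (1 / c) * ennreal ((6 * real r + 4) * sqrt (real N))"
    by (rule mult_left_mono) simp
  also have "ennreal (1 / c) * (ennreal c * X) = X" for X
    using c by (simp add: mult.assoc[symmetric] ennreal_mult[symmetric])
  also have "ennreal (1 / c) * ennreal ((6 * real r + 4) * sqrt (real N)) = ennreal (pi * (6 * real r + 4) / sqrt (real N))"
  proof -
    have "1 / c * ((6 * real r + 4) * sqrt (real N)) = pi * (6 * real r + 4) / sqrt (real N)"
    proof -
      have sp: "sqrt (real N) > 0" using N by simp
      have "1 / c = pi / (sqrt (real N) * sqrt (real N))" by (simp add: c_def)
      moreover have "\<And>s K. s > 0 \<Longrightarrow> pi / (s * s) * (K * s) = pi * K / (s::real)"
        by (simp add: field_simps power2_eq_square)
      ultimately show ?thesis using sp by (simp only:)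
    qed
    then show ?thesis using c by (simp add: ennreal_mult[symmetric])
  qed
  finally show ?thesis using E by simp
qed

theorem theorem1p1:
  fixes r :: nat
  assumes "r > 0"
  shows "((\<lambda>N. \<integral>\<^sup>+ z. ennreal (cmod (rho r N (complex_of_real (sqrt (real N / pi)) * z)
              - complex_of_real (indicator (ball (0::complex) 1) z))) \<partial>lborel)
           \<longlonglongrightarrow> 0) \<and>
         (\<exists>C::real. \<forall>N::nat.
           (\<integral>\<^sup>+ z. ennreal (cmod (rho r N z
              - complex_of_real (indicator (ball (0::complex) (sqrt (real N / pi))) z))) \<partial>lborel)
           \<le> ennreal (C * sqrt (real N)))"
proof
  show "\<exists>C::real. \<forall>N::nat.
           (\<integral>\<^sup>+ z. ennreal (cmod (rho r N z
              - complex_of_real (indicator (ball (0::complex) (sqrt (real N / pi))) z))) \<partial>lborel)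
           \<le> ennreal (C * sqrt (real N))"
    using part2 by blast
  have lim: "(\<lambda>N::nat. ennreal (pi * (6 * real r + 4) / sqrt (real N))) \<longlonglongrightarrow> ennreal 0"
    by (intro tendsto_ennrealI) real_asymp
  show "(\<lambda>N. \<integral>\<^sup>+ z. ennreal (cmod (rho r N (complex_of_real (sqrt (real N / pi)) * z)
              - complex_of_real (indicator (ball (0::complex) 1) z))) \<partial>lborel)
           \<longlonglongrightarrow> 0"
  proof (rule tendsto_sandwich[OF _ _ tendsto_const lim[simplified]])
    show "\<forall>\<^sub>F N in sequentially. 0 \<le> (\<integral>\<^sup>+ z. ennreal (cmod (rho r N (complex_of_real (sqrt (real N / pi)) * z)
              - complex_of_real (indicator (ball (0::complex) 1) z))) \<partial>lborel)" by simp
    show "\<forall>\<^sub>F N in sequentially. (\<integral>\<^sup>+ z. ennreal (cmod (rho r N (complex_of_real (sqrt (real N / pi)) * z)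
              - complex_of_real (indicator (ball (0::complex) 1) z))) \<partial>lborel) \<le> ennreal (pi * (6 * real r + 4) / sqrt (real N))"
      using eventually_ge_at_top[of "1::nat"] by eventually_elim (rule part1_bound)
  qed
qed

end
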